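(* Let $q>0$ and let $(p_n)_{n\ge1}$ be the $q$-Mallows process. Then for every $n\ge1$, $p_n$ is distributed according to the Mallows measure $\mu_{n,1/q}$.
   Context: For $q>0$ and $n\ge1$, $\mu_{n,q}(\pi)=q^{\mathrm{inv}(\pi)}/Z_{n,q}$ on $S_n$, with $\mathrm{inv}(\pi)$ the number of pairs $i<j$ with $\pi(i)>\pi(j)$ and $Z_{n,q}$ a normalizing constant. The $q$-Mallows process is the sequence of random permutations $p_n\in S_n$ defined as follows: let $(p_n(n))_{n\ge1}$ be independent random variables with $\mathbb{P}(p_n(n)=j)=\frac{q^{j-1}}{1+q+\dots+q^{n-1}}$ for $1\le j\le n$; set $p_1$ to be the unique permutation of $\{1\}$, and for $n\ge2$ define $p_n$ by the given value $p_n(n)$ and, for $1\le i\le n-1$, $p_n(i)=p_{n-1}(i)$ if $p_{n-1}(i)<p_n(n)$ and $p_n(i)=p_{n-1}(i)+1$ if $p_{n-1}(i)\ge p_n(n)$. *)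

theory Defs
  imports "HOL-Probability.Probability" "HOL-Combinatorics.Permutations"
begin

text \<open>Permutations of {1..n} are functions nat => nat that permute {1..n}
  (and are the identity outside).\<close>

definition inv_count :: "nat \<Rightarrow> (nat \<Rightarrow> nat) \<Rightarrow> nat" where
  "inv_count n \<pi> = card {(i, j). 1 \<le> i \<and> i < j \<and> j \<le> n \<and> \<pi> i > \<pi> j}"

definition mallows_Z :: "nat \<Rightarrow> real \<Rightarrow> real" where
  "mallows_Z n q = (\<Sum>\<pi>\<in>{\<pi>. \<pi> permutes {1..n}}. q ^ inv_count n \<pi>)"

definition mallows_prob :: "nat \<Rightarrow> real \<Rightarrow> (nat \<Rightarrow> nat) \<Rightarrow> real" where
  "mallows_prob n q \<pi> =
     (if \<pi> permutes {1..n} then q ^ inv_count n \<pi> / mallows_Z n q else 0)"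

text \<open>The q-Mallows process as a deterministic function of the sequence v of
  values v n = p_n(n).\<close>
fun mallows_proc :: "(nat \<Rightarrow> nat) \<Rightarrow> nat \<Rightarrow> (nat \<Rightarrow> nat)" where
  "mallows_proc v 0 = id"
| "mallows_proc v (Suc 0) = id"
| "mallows_proc v (Suc (Suc n)) =
     (\<lambda>i. if i = Suc (Suc n) then v (Suc (Suc n))
          else if 1 \<le> i \<and> i \<le> Suc n then
            (if mallows_proc v (Suc n) i < v (Suc (Suc n)) then mallows_proc v (Suc n) i
             else mallows_proc v (Suc n) i + 1)
          else i)"

end

theory Submission
  imports Defs
begin

definition compress :: "nat \<Rightarrow> (nat \<Rightarrow> nat) \<Rightarrow> (nat \<Rightarrow> nat)" where
  "compress n \<pi> = (\<lambda>i. if 1 \<le> i \<and> i \<le> n then (if \<pi> i < \<pi> (Suc n) then \<pi> i else \<pi> i - 1) else i)"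

definition rk :: "(nat \<Rightarrow> nat) \<Rightarrow> nat \<Rightarrow> nat" where
  "rk \<pi> k = card {i\<in>{1..k}. \<pi> i \<le> \<pi> k}"

lemma proc_Suc:
  assumes "n \<ge> 1"
  shows "mallows_proc v (Suc n) = (\<lambda>i. if i = Suc n then v (Suc n)
          else if 1 \<le> i \<and> i \<le> n then
            (if mallows_proc v n i < v (Suc n) then mallows_proc v n i
             else mallows_proc v n i + 1)
          else i)"
  using assms by (cases n) auto

lemma proc_out: "i = 0 \<or> i > n \<Longrightarrow> mallows_proc v n i = i"
proof (induction n)
  case 0 then show ?case by simp
next
  case (Suc n)
  show ?case
  proof (cases "n = 0")
    case True then show ?thesis by simp
  next
    case False
    then show ?thesis using Suc by (auto simp: proc_Suc)
  qed
qed

lemma perm_vals: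
  assumes "\<pi> permutes {1..m}" "i \<in> {1..m}"
  shows "\<pi> i \<in> {1..m}"
  using assms(2) permutes_in_image[OF assms(1)] by simp

lemma perm_inj:
  assumes "\<pi> permutes S" "\<pi> i = \<pi> i'"
  shows "i = i'"
proof -
  have "inv \<pi> (\<pi> i) = inv \<pi> (\<pi> i')" using assms(2) by simp
  then show ?thesis using permutes_inverses(2)[OF assms(1)] by simp
qed

lemma compress_perm:
  assumes p: "\<pi> permutes {1..Suc n}"
  shows "compress n \<pi> permutes {1..n}"
proof -
  let ?j = "\<pi> (Suc n)"
  have j: "?j \<in> {1..Suc n}" using perm_vals[OF p] by auto
  have ne: "\<pi> i \<noteq> ?j" if "i \<in> {1..n}" for i
  proof
    assume "\<pi> i = ?j"
    then have "i = Suc n" by (rule perm_inj[OF p])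
    then show False using that by simp
  qed
  have img: "compress n \<pi> ` {1..n} \<subseteq> {1..n}"
  proof
    fix y assume "y \<in> compress n \<pi> ` {1..n}"
    then obtain i where i: "i \<in> {1..n}" "y = compress n \<pi> i" by auto
    have pi: "\<pi> i \<in> {1..Suc n}" using perm_vals[OF p] i by auto
    have n: "\<pi> i \<noteq> ?j" using ne[OF i(1)] .
    show "y \<in> {1..n}"
    proof (cases "\<pi> i < ?j")
      case True then show ?thesis using i pi j by (simp add: compress_def)
    next
      case False then show ?thesis using i pi j n by (auto simp add: compress_def)
    qed
  qed
  have inj: "inj_on (compress n \<pi>) {1..n}"
  proof (rule inj_onI)
    fix a b assume ab: "a \<in> {1..n}" "b \<in> {1..n}" "compress n \<pi> a = compress n \<pi> b"
    have na: "\<pi> a \<noteq> ?j" using ne[OF ab(1)] .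
    have nb: "\<pi> b \<noteq> ?j" using ne[OF ab(2)] .
    have ca: "compress n \<pi> a = (if \<pi> a < ?j then \<pi> a else \<pi> a - 1)" using ab(1) by (simp add: compress_def)
    have cb: "compress n \<pi> b = (if \<pi> b < ?j then \<pi> b else \<pi> b - 1)" using ab(2) by (simp add: compress_def)
    have "\<pi> a = \<pi> b" using ab(3) na nb unfolding ca cb by (simp split: if_splits)
    then show "a = b" by (rule perm_inj[OF p])
  qed
  have "bij_betw (compress n \<pi>) {1..n} {1..n}"
    using endo_inj_surj[OF _ img inj] inj by (simp add: bij_betw_def)
  then show ?thesis by (rule bij_imp_permutes) (auto simp add: compress_def)
qed

lemma compress_order:
  assumes p: "\<pi> permutes {1..Suc n}" and i: "i \<in> {1..n}" and i': "i' \<in> {1..n}"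
  shows "(compress n \<pi> i \<le> compress n \<pi> i') = (\<pi> i \<le> \<pi> i')"
proof -
  have "\<pi> i \<noteq> \<pi> (Suc n)" "\<pi> i' \<noteq> \<pi> (Suc n)" using perm_inj[OF p] i i' by fastforce+
  then show ?thesis using i i' by (auto simp: compress_def)
qed

lemma compress_order_less:
  assumes p: "\<pi> permutes {1..Suc n}" and i: "i \<in> {1..n}" and i': "i' \<in> {1..n}"
  shows "(compress n \<pi> i < compress n \<pi> i') = (\<pi> i < \<pi> i')"
  using compress_order[OF p i' i] by linarith

lemma rk_compress:
  assumes p: "\<pi> permutes {1..Suc n}" and k: "k \<le> n"
  shows "rk (compress n \<pi>) k = rk \<pi> k"
proof (cases "k = 0")
  case True then show ?thesis by (simp add: rk_def)
next
  case False
  have "{i\<in>{1..k}. compress n \<pi> i \<le> compress n \<pi> k} = {i\<in>{1..k}. \<pi> i \<le> \<pi> k}"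
    using compress_order[OF p] k False by auto
  then show ?thesis by (simp add: rk_def)
qed

lemma rk_last:
  assumes p: "\<pi> permutes {1..m}" and m: "m \<ge> 1"
  shows "rk \<pi> m = \<pi> m"
proof -
  have inj: "inj_on \<pi> {i\<in>{1..m}. \<pi> i \<le> \<pi> m}"
    using permutes_inj[OF p] by (auto intro: inj_on_subset)
  have im: "\<pi> ` {1..m} = {1..m}" using permutes_image[OF p] .
  have "\<pi> ` {i\<in>{1..m}. \<pi> i \<le> \<pi> m} = {y\<in>{1..m}. y \<le> \<pi> m}"
  proof
    show "\<pi> ` {i\<in>{1..m}. \<pi> i \<le> \<pi> m} \<subseteq> {y\<in>{1..m}. y \<le> \<pi> m}" using im by auto
  next
    show "{y\<in>{1..m}. y \<le> \<pi> m} \<subseteq> \<pi> ` {i\<in>{1..m}. \<pi> i \<le> \<pi> m}"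
    proof
      fix x assume x: "x \<in> {y\<in>{1..m}. y \<le> \<pi> m}"
      then have "x \<in> \<pi> ` {1..m}" using im by simp
      then obtain i where "i \<in> {1..m}" "x = \<pi> i" by auto
      then show "x \<in> \<pi> ` {i\<in>{1..m}. \<pi> i \<le> \<pi> m}" using x by auto
    qed
  qed
  also have "\<dots> = {1..\<pi> m}" using perm_vals[OF p, of m] m by auto
  finally have "card (\<pi> ` {i\<in>{1..m}. \<pi> i \<le> \<pi> m}) = \<pi> m" by simp
  then show ?thesis using card_image[OF inj] by (simp add: rk_def)
qed

lemma rk_range:
  assumes "1 \<le> k"
  shows "1 \<le> rk \<pi> k \<and> rk \<pi> k \<le> k"
proof -
  have "k \<in> {i\<in>{1..k}. \<pi> i \<le> \<pi> k}" using assms by auto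
  then have "card {i\<in>{1..k}. \<pi> i \<le> \<pi> k} > 0"
    by (subst card_gt_0_iff) auto
  then have "card {i\<in>{1..k}. \<pi> i \<le> \<pi> k} \<ge> 1" by linarith
  moreover have "card {i\<in>{1..k}. \<pi> i \<le> \<pi> k} \<le> card {1..k}"
    by (rule card_mono) auto
  ultimately show ?thesis by (simp add: rk_def)
qed

lemma card_perm_pred:
  assumes p: "\<pi> permutes {1..m}"
  shows "card {i\<in>{1..m}. P (\<pi> i)} = card {y\<in>{1..m}. P y}"
proof -
  have inj: "inj_on \<pi> {i\<in>{1..m}. P (\<pi> i)}"
    using permutes_inj[OF p] by (auto intro: inj_on_subset)
  have im: "\<pi> ` {1..m} = {1..m}" using permutes_image[OF p] .
  have "\<pi> ` {i\<in>{1..m}. P (\<pi> i)} = {y\<in>{1..m}. P y}"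
  proof
    show "\<pi> ` {i\<in>{1..m}. P (\<pi> i)} \<subseteq> {y\<in>{1..m}. P y}" using im by auto
  next
    show "{y\<in>{1..m}. P y} \<subseteq> \<pi> ` {i\<in>{1..m}. P (\<pi> i)}"
    proof
      fix x assume x: "x \<in> {y\<in>{1..m}. P y}"
      then have "x \<in> \<pi> ` {1..m}" using im by simp
      then obtain i where "i \<in> {1..m}" "x = \<pi> i" by auto
      then show "x \<in> \<pi> ` {i\<in>{1..m}. P (\<pi> i)}" using x by auto
    qed
  qed
  then show ?thesis using card_image[OF inj] by simp
qed

lemma inv_rec:
  assumes p: "\<pi> permutes {1..Suc n}"
  shows "inv_count (Suc n) \<pi> = inv_count n (compress n \<pi>) + (Suc n - \<pi> (Suc n))"
proof -
  let ?j = "\<pi> (Suc n)"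
  define A where "A = {(i,j). 1 \<le> i \<and> i < j \<and> j \<le> n \<and> \<pi> i > \<pi> j}"
  define C where "C = {i\<in>{1..n}. \<pi> i > ?j}"
  define B where "B = (\<lambda>i. (i, Suc n)) ` C"
  have S: "{(i, j). 1 \<le> i \<and> i < j \<and> j \<le> Suc n \<and> \<pi> i > \<pi> j} = A \<union> B"
    unfolding A_def B_def C_def by (auto simp: le_Suc_eq)
  have fA: "finite A"
    by (rule finite_subset[of _ "{1..n} \<times> {1..n}"]) (auto simp: A_def)
  have fB: "finite B" unfolding B_def C_def by simp
  have dis: "A \<inter> B = {}" unfolding A_def B_def by auto
  have A': "A = {(i, j). 1 \<le> i \<and> i < j \<and> j \<le> n \<and> compress n \<pi> i > compress n \<pi> j}"
    unfolding A_def using compress_order_less[OF p] by fastforce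
  have "card B = card C" unfolding B_def by (rule card_image) (auto intro: inj_onI)
  also have "C = {i\<in>{1..Suc n}. \<pi> i > ?j}" unfolding C_def by (auto simp: le_Suc_eq)
  also have "card \<dots> = card {y\<in>{1..Suc n}. y > ?j}"
    using card_perm_pred[OF p, of "\<lambda>y. y > ?j"] by simp
  also have "{y\<in>{1..Suc n}. y > ?j} = {Suc ?j..Suc n}" by auto
  finally have cB: "card B = Suc n - ?j" by simp
  have "inv_count (Suc n) \<pi> = card A + card B"
    unfolding inv_count_def S by (rule card_Un_disjoint[OF fA fB dis])
  then show ?thesis using cB unfolding inv_count_def A' by simp
qed

lemma proc_compress:
  assumes n: "n \<ge> 1" and p: "\<pi> permutes {1..Suc n}" and e: "mallows_proc v (Suc n) = \<pi>"
  shows "v (Suc n) = \<pi> (Suc n)" "mallows_proc v n = compress n \<pi>"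
proof -
  have "mallows_proc v (Suc n) (Suc n) = v (Suc n)" by (simp add: proc_Suc[OF n])
  then show j: "v (Suc n) = \<pi> (Suc n)" using e by simp
  show "mallows_proc v n = compress n \<pi>"
  proof
    fix i
    show "mallows_proc v n i = compress n \<pi> i"
    proof (cases "1 \<le> i \<and> i \<le> n")
      case True
      have pi: "\<pi> i = (if mallows_proc v n i < v (Suc n) then mallows_proc v n i
             else mallows_proc v n i + 1)"
      proof -
        have "mallows_proc v (Suc n) i = (if mallows_proc v n i < v (Suc n) then mallows_proc v n i
             else mallows_proc v n i + 1)" using True by (simp add: proc_Suc[OF n])
        then show ?thesis using e by simp
      qed
      have ne: "\<pi> i \<noteq> \<pi> (Suc n)"
      proof
        assume "\<pi> i = \<pi> (Suc n)"
        then have "i = Suc n" by (rule perm_inj[OF p])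
        then show False using True by simp
      qed
      show ?thesis using True pi ne j by (auto simp: compress_def)
    next
      case False
      then show ?thesis using proc_out[of i n v] by (auto simp: compress_def)
    qed
  qed
qed

lemma proc_char:
  assumes "n \<ge> 1"
  shows "\<pi> permutes {1..n} \<Longrightarrow> (mallows_proc v n = \<pi> \<longleftrightarrow> (\<forall>k\<in>{2..n}. v k = rk \<pi> k))"
  using assms
proof (induction n arbitrary: \<pi> rule: nat_induct_at_least)
  case base
  then have "\<pi> = id" using permutes_sing by simp
  then show ?case by simp
next
  case (Suc n)
  note p = Suc.prems(1)
  have cp: "compress n \<pi> permutes {1..n}" by (rule compress_perm[OF p])
  have rl: "rk \<pi> (Suc n) = \<pi> (Suc n)" by (rule rk_last[OF p]) simp
  show ?case
  proof
    assume e: "mallows_proc v (Suc n) = \<pi>"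
    note pc = proc_compress[OF Suc.hyps(1) p e]
    have "\<forall>k\<in>{2..n}. v k = rk (compress n \<pi>) k" using Suc.IH[OF cp] pc(2) Suc.hyps by simp
    then have "\<forall>k\<in>{2..n}. v k = rk \<pi> k" using rk_compress[OF p] by simp
    then show "\<forall>k\<in>{2..Suc n}. v k = rk \<pi> k" using pc(1) rl by (auto simp: le_Suc_eq)
  next
    assume h: "\<forall>k\<in>{2..Suc n}. v k = rk \<pi> k"
    have "\<forall>k\<in>{2..n}. v k = rk (compress n \<pi>) k" using h rk_compress[OF p] by simp
    then have mp: "mallows_proc v n = compress n \<pi>" using Suc.IH[OF cp] Suc.hyps by simp
    have j: "v (Suc n) = \<pi> (Suc n)" using h rl Suc.hyps by simp
    show "mallows_proc v (Suc n) = \<pi>"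
    proof
      fix i
      show "mallows_proc v (Suc n) i = \<pi> i"
      proof (cases "1 \<le> i \<and> i \<le> n")
        case True
        have ne: "\<pi> i \<noteq> \<pi> (Suc n)"
        proof
          assume "\<pi> i = \<pi> (Suc n)"
          then have "i = Suc n" by (rule perm_inj[OF p])
          then show False using True by simp
        qed
        show ?thesis using True ne j mp proc_Suc[OF Suc.hyps(1), of v]
          by (auto simp: compress_def)
      next
        case False
        show ?thesis
        proof (cases "i = Suc n")
          case True then show ?thesis using j proc_Suc[OF Suc.hyps(1), of v] by simp
        next
          case F2: False
          then have "i \<notin> {1..Suc n}" using False by auto
          then have "\<pi> i = i" using p by (simp add: permutes_def)
          then show ?thesis using False F2 proc_Suc[OF Suc.hyps(1), of v] by auto
        qed
      qed
    qed
  qed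
qed

lemma proc_perm:
  assumes "n \<ge> 1"
  shows "(\<forall>k\<in>{2..n}. v k \<in> {1..k}) \<Longrightarrow> mallows_proc v n permutes {1..n}"
  using assms
proof (induction n rule: nat_induct_at_least)
  case base
  then show ?case by (simp add: id_def)
next
  case (Suc n)
  have p: "mallows_proc v n permutes {1..n}" using Suc by auto
  define j where "j = v (Suc n)"
  have j: "j \<in> {1..Suc n}" using Suc.prems Suc.hyps unfolding j_def by auto
  define f where "f = mallows_proc v (Suc n)"
  have f: "f = (\<lambda>i. if i = Suc n then j
          else if 1 \<le> i \<and> i \<le> n then
            (if mallows_proc v n i < j then mallows_proc v n i
             else mallows_proc v n i + 1)
          else i)" unfolding f_def j_def by (rule proc_Suc[OF Suc.hyps(1)])
  have pv: "mallows_proc v n i \<in> {1..n}" if "i \<in> {1..n}" for i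
    using perm_vals[OF p that] .
  have img: "f ` {1..Suc n} \<subseteq> {1..Suc n}"
  proof
    fix y assume "y \<in> f ` {1..Suc n}"
    then obtain i where i: "i \<in> {1..Suc n}" "y = f i" by auto
    show "y \<in> {1..Suc n}"
    proof (cases "i = Suc n")
      case True then show ?thesis using i j f by simp
    next
      case False
      then have "i \<in> {1..n}" using i by auto
      then show ?thesis using pv[of i] i f False by auto
    qed
  qed
  have fne: "f a \<noteq> j" if "a \<in> {1..n}" for a
    using that f by auto
  have inj: "inj_on f {1..Suc n}"
  proof (rule inj_onI)
    fix a b assume ab: "a \<in> {1..Suc n}" "b \<in> {1..Suc n}" "f a = f b"
    show "a = b"
    proof (cases "a = Suc n \<or> b = Suc n")
      case True
      have fs: "f (Suc n) = j" using f by simp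
      show ?thesis
      proof (rule ccontr)
        assume ne: "a \<noteq> b"
        show False
        proof (cases "a = Suc n")
          case True
          then have "b \<in> {1..n}" using ab ne by auto
          then show False using fne[of b] ab(3) fs True by simp
        next
          case False
          then have "b = Suc n" "a \<in> {1..n}" using ab \<open>a = Suc n \<or> b = Suc n\<close> by auto
          then show False using fne[of a] ab(3) fs by simp
        qed
      qed
    next
      case False
      then have a: "a \<in> {1..n}" and b: "b \<in> {1..n}" using ab by auto
      have "mallows_proc v n a = mallows_proc v n b"
        using ab(3) a b False unfolding f by (auto split: if_splits)
      then show ?thesis by (rule perm_inj[OF p])
    qed
  qed
  have "bij_betw f {1..Suc n} {1..Suc n}"
    using endo_inj_surj[OF _ img inj] inj by (simp add: bij_betw_def)
  then have "f permutes {1..Suc n}" by (rule bij_imp_permutes) (auto simp: f)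
  then show ?case unfolding f_def .
qed

definition Sq :: "real \<Rightarrow> nat \<Rightarrow> real" where
  "Sq q k = (\<Sum>i<k. q ^ i)"

lemma weight:
  assumes "n \<ge> 1" and q: "q > 0"
  shows "\<pi> permutes {1..n} \<Longrightarrow> (\<Prod>k\<in>{2..n}. q ^ (rk \<pi> k - 1) / Sq q k)
     = (\<Prod>k\<in>{2..n}. q ^ (k - 1) / Sq q k) * (1 / q) ^ inv_count n \<pi>"
  using assms(1)
proof (induction n arbitrary: \<pi> rule: nat_induct_at_least)
  case base
  have "{(i, j). 1 \<le> i \<and> i < j \<and> j \<le> (1::nat) \<and> \<pi> i > \<pi> j} = {}" by auto
  then have i0: "inv_count 1 \<pi> = 0" by (simp only: inv_count_def card.empty)
  have e: "{2..(1::nat)} = {}" by simp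
  show ?case unfolding e prod.empty i0 power_0 by (rule mult_1_right[symmetric])
next
  case (Suc n)
  note p = Suc.prems(1)
  let ?j = "\<pi> (Suc n)"
  let ?I = "inv_count n (compress n \<pi>)"
  have cp: "compress n \<pi> permutes {1..n}" by (rule compress_perm[OF p])
  have ins: "{2..Suc n} = insert (Suc n) {2..n}" using Suc.hyps by auto
  have rl: "rk \<pi> (Suc n) = ?j" by (rule rk_last[OF p]) simp
  have j: "?j \<in> {1..Suc n}" using perm_vals[OF p, of "Suc n"] by simp
  have "(\<Prod>k\<in>{2..n}. q ^ (rk \<pi> k - 1) / Sq q k) = (\<Prod>k\<in>{2..n}. q ^ (rk (compress n \<pi>) k - 1) / Sq q k)"
    by (rule prod.cong) (auto simp: rk_compress[OF p])
  also have "\<dots> = (\<Prod>k\<in>{2..n}. q ^ (k - 1) / Sq q k) * (1 / q) ^ ?I"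
    by (rule Suc.IH[OF cp])
  finally have ih: "(\<Prod>k\<in>{2..n}. q ^ (rk \<pi> k - 1) / Sq q k) = (\<Prod>k\<in>{2..n}. q ^ (k - 1) / Sq q k) * (1 / q) ^ ?I" .
  have e1: "q ^ n = q ^ (?j - 1) * q ^ (Suc n - ?j)"
    using j by (simp add: power_add[symmetric])
  have e2: "(1 / q) ^ (Suc n - ?j) * q ^ (Suc n - ?j) = 1"
    using q by (simp add: power_one_over)
  have key: "q ^ (?j - 1) = q ^ n * (1 / q) ^ (Suc n - ?j)"
  proof -
    have "q ^ (?j - 1) = q ^ (?j - 1) * ((1 / q) ^ (Suc n - ?j) * q ^ (Suc n - ?j))" using e2 by simp
    also have "\<dots> = (q ^ (?j - 1) * q ^ (Suc n - ?j)) * (1 / q) ^ (Suc n - ?j)" by (simp only: ac_simps)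
    also have "\<dots> = q ^ n * (1 / q) ^ (Suc n - ?j)" using e1 by simp
    finally show ?thesis .
  qed
  have L: "(\<Prod>k\<in>{2..Suc n}. q ^ (rk \<pi> k - 1) / Sq q k)
      = q ^ (rk \<pi> (Suc n) - 1) / Sq q (Suc n) * (\<Prod>k\<in>{2..n}. q ^ (rk \<pi> k - 1) / Sq q k)"
    unfolding ins by (simp add: prod.insert)
  have R: "(\<Prod>k\<in>{2..Suc n}. q ^ (k - 1) / Sq q k)
      = q ^ (Suc n - 1) / Sq q (Suc n) * (\<Prod>k\<in>{2..n}. q ^ (k - 1) / Sq q k)"
    unfolding ins by (simp add: prod.insert)
  show ?case
    unfolding L R ih rl key inv_rec[OF p] power_add diff_Suc_1
    by (simp only: divide_inverse mult_ac)
qed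

lemma lemma2p1_aux:
  fixes M :: "'a measure" and X :: "nat \<Rightarrow> 'a \<Rightarrow> nat" and q :: real and n :: nat
  assumes "prob_space M"
    and q: "q > 0"
    and ind: "prob_space.indep_vars M (\<lambda>_. count_space UNIV) X {1..}"
    and dist: "\<And>k j. k \<ge> 1 \<Longrightarrow> 1 \<le> j \<Longrightarrow> j \<le> k \<Longrightarrow>
           measure M {\<omega> \<in> space M. X k \<omega> = j} = q ^ (j - 1) / (\<Sum>i<k. q ^ i)"
    and n: "n \<ge> 1"
  shows "measure M {\<omega> \<in> space M. mallows_proc (\<lambda>k. X k \<omega>) n = \<pi>}
               = mallows_prob n (1 / q) \<pi>"
proof -
  interpret prob_space M by fact
  have iv: "(\<forall>i\<in>{1..}. X i \<in> M \<rightarrow>\<^sub>M count_space UNIV) \<and>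
    indep_sets (\<lambda>i. sigma_sets (space M) {X i -` A \<inter> space M |A. A \<in> sets (count_space UNIV)}) {1..}"
    using ind by (simp add: indep_vars_def)
  have ev: "{\<omega>\<in>space M. X k \<omega> \<in> A} \<in> events" if "k \<ge> 1" for k A
  proof -
    have "X k \<in> M \<rightarrow>\<^sub>M count_space UNIV" using iv that by auto
    then have "X k -` A \<inter> space M \<in> events" by (rule measurable_sets) simp
    moreover have "X k -` A \<inter> space M = {\<omega>\<in>space M. X k \<omega> \<in> A}" by auto
    ultimately show ?thesis by simp
  qed
  have ev1: "{\<omega>\<in>space M. X k \<omega> = a} \<in> events" if "k \<ge> 1" for k a
    using ev[OF that, of "{a}"] by simp
  have Sq_pos: "Sq q k > 0" if "k \<ge> 1" for k
  proof -
    have "Sq q k = q ^ 0 + (\<Sum>i\<in>{..<k} - {0}. q ^ i)" unfolding Sq_def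
      using that by (subst sum.remove[of _ 0]) auto
    moreover have "(\<Sum>i\<in>{..<k} - {0}. q ^ i) \<ge> 0" using q by (intro sum_nonneg) simp
    ultimately show ?thesis by simp
  qed
  have prodf: "measure M {\<omega>\<in>space M. \<forall>k\<in>{2..n}. X k \<omega> = a k}
      = (\<Prod>k\<in>{2..n}. measure M {\<omega>\<in>space M. X k \<omega> = a k})" for a
  proof (cases "n < 2")
    case True
    then have "{2..n} = {}" by auto
    then show ?thesis by (simp add: prob_space)
  next
    case False
    then have ne: "{2..n} \<noteq> {}" by auto
    have "{\<omega>\<in>space M. \<forall>k\<in>{2..n}. X k \<omega> = a k} = (\<Inter>k\<in>{2..n}. X k -` {a k} \<inter> space M)"
      using ne by blast
    also have "measure M \<dots> = (\<Prod>k\<in>{2..n}. measure M (X k -` {a k} \<inter> space M))"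
      proof (rule indep_setsD[OF conjunct2[OF iv]])
      show "{2..n} \<subseteq> {1..}" by auto
      show "{2..n} \<noteq> {}" by (rule ne)
      show "finite {2..n}" by simp
      show "\<forall>j\<in>{2..n}. X j -` {a j} \<inter> space M \<in> sigma_sets (space M) {X j -` A \<inter> space M |A. A \<in> sets (count_space UNIV)}"
      proof
        fix j assume "j \<in> {2..n}"
        show "X j -` {a j} \<inter> space M \<in> sigma_sets (space M) {X j -` A \<inter> space M |A. A \<in> sets (count_space UNIV)}"
        proof (rule sigma_sets.Basic)
          show "X j -` {a j} \<inter> space M \<in> {X j -` A \<inter> space M |A. A \<in> sets (count_space UNIV)}"
            by (rule CollectI, rule exI[of _ "{a j}"]) simp
        qed
      qed
    qed
    also have "\<dots> = (\<Prod>k\<in>{2..n}. measure M {\<omega>\<in>space M. X k \<omega> = a k})"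
    proof (rule prod.cong)
      fix k
      have "X k -` {a k} \<inter> space M = {\<omega>\<in>space M. X k \<omega> = a k}" by blast
      then show "measure M (X k -` {a k} \<inter> space M) = measure M {\<omega>\<in>space M. X k \<omega> = a k}" by simp
    qed simp
    finally show ?thesis .
  qed
  define G where "G = {\<omega>\<in>space M. \<forall>k\<in>{2..n}. X k \<omega> \<in> {1..k}}"
  have Gev: "G \<in> events" unfolding G_def
  proof (rule sets.sets_Collect_finite_All)
    fix k assume "k \<in> {2..n}"
    then show "{\<omega>\<in>space M. X k \<omega> \<in> {1..k}} \<in> events" by (intro ev) auto
  qed simp
  have range1: "measure M {\<omega>\<in>space M. X k \<omega> \<in> {1..k}} = 1" if k: "k \<ge> 1" for k
  proof -
    have "{\<omega>\<in>space M. X k \<omega> \<in> {1..k}} = (\<Union>j\<in>{1..k}. {\<omega>\<in>space M. X k \<omega> = j})" by auto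
    also have "measure M \<dots> = (\<Sum>j\<in>{1..k}. measure M {\<omega>\<in>space M. X k \<omega> = j})"
      by (rule finite_measure_finite_Union) (auto intro: ev1[OF k] simp: disjoint_family_on_def)
    also have "\<dots> = (\<Sum>j\<in>{1..k}. q ^ (j - 1) / Sq q k)"
      by (rule sum.cong) (auto simp: dist k Sq_def)
    also have "\<dots> = (\<Sum>j\<in>{1..k}. q ^ (j - 1)) / Sq q k" by (simp add: sum_divide_distrib)
    also have "(\<Sum>j\<in>{1..k}. q ^ (j - 1)) = Sq q k"
      unfolding Sq_def by (simp add: sum.atLeast1_atMost_eq)
    finally show ?thesis using Sq_pos[OF k] by simp
  qed
  have compl0: "measure M (space M - G) = 0"
  proof -
    have "space M - G \<subseteq> (\<Union>k\<in>{2..n}. space M - {\<omega>\<in>space M. X k \<omega> \<in> {1..k}})"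
      unfolding G_def by auto
    have Uk: "space M - {\<omega>\<in>space M. X k \<omega> \<in> {1..k}} \<in> events" if "k \<in> {2..n}" for k
    proof -
      have "{\<omega>\<in>space M. X k \<omega> \<in> {1..k}} \<in> events" using that ev[of k "{1..k}"] by simp
      then show ?thesis by (rule sets.compl_sets)
    qed
    have Ue: "(\<Union>k\<in>{2..n}. space M - {\<omega>\<in>space M. X k \<omega> \<in> {1..k}}) \<in> events"
      by (rule sets.finite_UN[OF _ Uk]) simp_all
    then have "measure M (space M - G) \<le> measure M (\<Union>k\<in>{2..n}. space M - {\<omega>\<in>space M. X k \<omega> \<in> {1..k}})"
      using finite_measure_mono[OF \<open>space M - G \<subseteq> _\<close>] by blast
    also have "\<dots> \<le> (\<Sum>k\<in>{2..n}. measure M (space M - {\<omega>\<in>space M. X k \<omega> \<in> {1..k}}))"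
      by (rule finite_measure_subadditive_finite) (simp, use Uk in blast)
    also have "\<dots> = 0"
    proof (rule sum.neutral, rule ballI)
      fix k assume k: "k \<in> {2..n}"
      have "{\<omega>\<in>space M. X k \<omega> \<in> {1..k}} \<in> events" using k ev[of k "{1..k}"] by simp
      from prob_compl[OF this] show "measure M (space M - {\<omega>\<in>space M. X k \<omega> \<in> {1..k}}) = 0"
        using range1[of k] k by simp
    qed
    finally show ?thesis using measure_nonneg[of M "space M - G"] by linarith
  qed
  have G1: "measure M G = 1" using prob_compl[OF Gev] compl0 by simp
  define E where "E = (\<lambda>\<pi>. {\<omega> \<in> space M. mallows_proc (\<lambda>k. X k \<omega>) n = \<pi>})"
  define K where "K = (\<Prod>k\<in>{2..n}. q ^ (k - 1) / Sq q k)"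
  have Eeq: "E \<pi>' = {\<omega>\<in>space M. \<forall>k\<in>{2..n}. X k \<omega> = rk \<pi>' k}" if p: "\<pi>' permutes {1..n}" for \<pi>'
    unfolding E_def using proc_char[OF n p] by auto
  have Eev: "E \<pi>' \<in> events" if p: "\<pi>' permutes {1..n}" for \<pi>'
    unfolding Eeq[OF p]
  proof (rule sets.sets_Collect_finite_All)
    fix k assume "k \<in> {2..n}"
    then show "{\<omega>\<in>space M. X k \<omega> = rk \<pi>' k} \<in> events" by (intro ev1) simp
  qed simp
  have Emeas: "measure M (E \<pi>') = K * (1 / q) ^ inv_count n \<pi>'" if p: "\<pi>' permutes {1..n}" for \<pi>'
  proof -
    have "measure M (E \<pi>') = (\<Prod>k\<in>{2..n}. measure M {\<omega>\<in>space M. X k \<omega> = rk \<pi>' k})"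
      unfolding Eeq[OF p] by (rule prodf)
    also have "\<dots> = (\<Prod>k\<in>{2..n}. q ^ (rk \<pi>' k - 1) / Sq q k)"
    proof (rule prod.cong)
      fix k assume k: "k \<in> {2..n}"
      then have k1: "1 \<le> k" by simp
      show "measure M {\<omega>\<in>space M. X k \<omega> = rk \<pi>' k} = q ^ (rk \<pi>' k - 1) / Sq q k"
        unfolding Sq_def using rk_range[OF k1, of \<pi>'] by (intro dist k1) auto
    qed simp
    also have "\<dots> = K * (1 / q) ^ inv_count n \<pi>'" unfolding K_def by (rule weight[OF n q p])
    finally show ?thesis .
  qed
  define P where "P = {\<pi>. \<pi> permutes {1..n}}"
  have fP: "finite P" unfolding P_def by (rule finite_permutations) simp
  have GU: "G \<subseteq> (\<Union>\<pi>\<in>P. E \<pi>)"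
  proof
    fix \<omega> assume w: "\<omega> \<in> G"
    then have "mallows_proc (\<lambda>k. X k \<omega>) n permutes {1..n}"
      unfolding G_def by (intro proc_perm[OF n]) auto
    then show "\<omega> \<in> (\<Union>\<pi>\<in>P. E \<pi>)" using w unfolding P_def E_def G_def by auto
  qed
  have Uev: "(\<Union>\<pi>\<in>P. E \<pi>) \<in> events" using fP Eev unfolding P_def by auto
  have "measure M (\<Union>\<pi>\<in>P. E \<pi>) = (\<Sum>\<pi>\<in>P. measure M (E \<pi>))"
  proof (rule finite_measure_finite_Union[OF fP])
    show "E ` P \<subseteq> events" using Eev unfolding P_def by auto
    show "disjoint_family_on E P" by (auto simp: disjoint_family_on_def E_def)
  qed
  also have "\<dots> = (\<Sum>\<pi>\<in>P. K * (1 / q) ^ inv_count n \<pi>)"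
    by (rule sum.cong) (auto simp: P_def Emeas)
  also have "\<dots> = K * mallows_Z n (1 / q)"
    unfolding mallows_Z_def P_def by (simp add: sum_distrib_left)
  finally have UK: "measure M (\<Union>\<pi>\<in>P. E \<pi>) = K * mallows_Z n (1 / q)" .
  have "measure M (\<Union>\<pi>\<in>P. E \<pi>) \<ge> 1"
    using finite_measure_mono[OF GU Uev] G1 by simp
  moreover have "measure M (\<Union>\<pi>\<in>P. E \<pi>) \<le> 1" by simp
  ultimately have KZ: "K * mallows_Z n (1 / q) = 1" using UK by linarith
  show ?thesis
  proof (cases "\<pi> permutes {1..n}")
    case True
    have "measure M (E \<pi>) = K * (1 / q) ^ inv_count n \<pi>" by (rule Emeas[OF True])
    also have "\<dots> = (1 / q) ^ inv_count n \<pi> / mallows_Z n (1 / q)"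
    proof -
      have Z: "mallows_Z n (1 / q) \<noteq> 0" using KZ by auto
      have "K = 1 / mallows_Z n (1 / q)" using KZ Z by (simp add: eq_divide_eq)
      then show ?thesis by simp
    qed
    finally show ?thesis using True unfolding E_def mallows_prob_def by simp
  next
    case False
    have "E \<pi> \<subseteq> space M - G"
    proof
      fix \<omega> assume w: "\<omega> \<in> E \<pi>"
      show "\<omega> \<in> space M - G"
      proof
        show "\<omega> \<in> space M" using w unfolding E_def by simp
      next
        show "\<omega> \<notin> G"
        proof
          assume "\<omega> \<in> G"
          then have "mallows_proc (\<lambda>k. X k \<omega>) n permutes {1..n}"
            unfolding G_def by (intro proc_perm[OF n]) auto
          then show False using w False unfolding E_def by auto
        qed
      qed
    qed
    then have "measure M (E \<pi>) \<le> measure M (space M - G)"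
      by (rule finite_measure_mono) (rule sets.compl_sets[OF Gev])
    then have "measure M (E \<pi>) = 0" using compl0 measure_nonneg[of M "E \<pi>"] by linarith
    then show ?thesis using False unfolding E_def mallows_prob_def by simp
  qed
qed

theorem lemma2p1:
  fixes M :: "'a measure" and X :: "nat \<Rightarrow> 'a \<Rightarrow> nat" and q :: real and n :: nat
  assumes "prob_space M"
    and "q > 0"
    and "prob_space.indep_vars M (\<lambda>_. count_space UNIV) X {1..}"
    and "\<And>k j. k \<ge> 1 \<Longrightarrow> 1 \<le> j \<Longrightarrow> j \<le> k \<Longrightarrow>
           measure M {\<omega> \<in> space M. X k \<omega> = j} = q ^ (j - 1) / (\<Sum>i<k. q ^ i)"
    and "n \<ge> 1"
  shows "\<forall>\<pi>. measure M {\<omega> \<in> space M. mallows_proc (\<lambda>k. X k \<omega>) n = \<pi>}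
               = mallows_prob n (1 / q) \<pi>"
  using lemma2p1_aux[OF assms] by blast

end
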